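(* Let $A=(A(i,j))_{i,j\in\mathbb{N}}$ be an infinite matrix with entries in $\{0,1\}$ having no identically zero rows, let $(X,\mu)$ be a measure space, and let $\{R_j\}_{j=1}^\infty$ and $\{D_j\}_{j=1}^\infty$ be families of measurable subsets of $X$ such that (a) $\mu(R_i\cap R_j)=0$ for all $i\neq j$; (b) $X\stackrel{\mu\text{-a.e.}}{=}\bigcup_{j=1}^\infty R_j$; (c) $D_i\stackrel{\mu\text{-a.e.}}{=}\bigcup_{j\in\mathbb{N}:A(i,j)=1}R_j$ for every $i$. Then: (1) for all $i,j$, $\mu(R_j\cap D_i)=0$ if $A(i,j)=0$ and $\mu(R_j\setminus D_i)=0$ if $A(i,j)=1$; and (2) for each pair $U,V$ of finite subsets of $\mathbb{N}$ such that $A(U,V,j)=1$ for only finitely many $j$, $$\bigcap_{u\in U}D_u\cap\bigcap_{v\in V}(X\setminus D_v)\stackrel{\mu\text{-a.e.}}{=}\bigcup_{j\in\mathbb{N}:A(U,V,j)=1}R_j.$$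
   Context: For measurable $Y,Z\subseteq X$, $Y\stackrel{\mu\text{-a.e.}}{=}Z$ means $\mu(Y\setminus Z)=0=\mu(Z\setminus Y)$. For finite $U,V\subseteq\mathbb{N}$ and $j\in\mathbb{N}$, $A(U,V,j)=\prod_{u\in U}A(u,j)\prod_{v\in V}(1-A(v,j))$. *)

theory Defs
  imports "HOL-Analysis.Analysis"
begin

definition ae_set_eq :: "'a measure \<Rightarrow> 'a set \<Rightarrow> 'a set \<Rightarrow> bool" where
  "ae_set_eq M Y Z \<longleftrightarrow> emeasure M (Y - Z) = 0 \<and> emeasure M (Z - Y) = 0"

definition Aprod :: "(nat \<Rightarrow> nat \<Rightarrow> nat) \<Rightarrow> nat set \<Rightarrow> nat set \<Rightarrow> nat \<Rightarrow> nat" where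
  "Aprod A U V j = (\<Prod>u\<in>U. A u j) * (\<Prod>v\<in>V. (1 - A v j))"

end

theory Submission
  imports Defs
begin

lemma Aprod_iff:
  assumes A01: "\<And>i j. A i j \<in> {0, 1}" and "finite U" "finite V"
  shows "Aprod A U V j = 1 \<longleftrightarrow> (\<forall>u\<in>U. A u j = 1) \<and> (\<forall>v\<in>V. A v j = 0)"
proof -
  have e: "(1::nat) - A v j = 1 \<longleftrightarrow> A v j = 0" for v using A01[of v j] by auto
  show ?thesis
  proof -
    have m: "(a::nat) * b = 1 \<longleftrightarrow> a = 1 \<and> b = 1" for a b by simp
    have p1: "(\<Prod>u\<in>U. A u j) = 1 \<longleftrightarrow> (\<forall>u\<in>U. A u j = 1)" using assms(2) by (rule prod_eq_1_iff)
    have p2: "(\<Prod>v\<in>V. 1 - A v j) = 1 \<longleftrightarrow> (\<forall>v\<in>V. (1::nat) - A v j = 1)" using assms(3) by (rule prod_eq_1_iff)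
    show ?thesis unfolding Aprod_def m p1 p2 e by blast
  qed
qed

theorem mainTheorem3:
  fixes M :: "'a measure"
    and A :: "nat \<Rightarrow> nat \<Rightarrow> nat"
    and R D :: "nat \<Rightarrow> 'a set"
  assumes A01: "\<And>i j. A i j \<in> {0, 1}"
    and A_rows: "\<And>i. \<exists>j. A i j \<noteq> 0"
    and R_meas: "\<And>j. R j \<in> sets M"
    and D_meas: "\<And>j. D j \<in> sets M"
    and a: "\<And>i j. i \<noteq> j \<Longrightarrow> emeasure M (R i \<inter> R j) = 0"
    and b: "ae_set_eq M (space M) (\<Union>j. R j)"
    and c: "\<And>i. ae_set_eq M (D i) (\<Union>j\<in>{j. A i j = 1}. R j)"
  shows "(\<forall>i j. (A i j = 0 \<longrightarrow> emeasure M (R j \<inter> D i) = 0)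
               \<and> (A i j = 1 \<longrightarrow> emeasure M (R j - D i) = 0))
       \<and> (\<forall>U V. finite U \<and> finite V \<and> finite {j. Aprod A U V j = 1} \<longrightarrow>
            ae_set_eq M
              (space M \<inter> (\<Inter>u\<in>U. D u) \<inter> (\<Inter>v\<in>V. space M - D v))
              (\<Union>j\<in>{j. Aprod A U V j = 1}. R j))"
proof -
  have Rn: "R i \<inter> R j \<in> null_sets M" if "i \<noteq> j" for i j
    using a[OF that] R_meas by (auto simp: null_sets_def)
  have cU: "(\<Union>j\<in>{j. A i j = 1}. R j) \<in> sets M" for i using R_meas by auto
  have c1: "D i - (\<Union>j\<in>{j. A i j = 1}. R j) \<in> null_sets M" for i
    using c[of i] D_meas cU by (auto simp: ae_set_eq_def null_sets_def)
  have c2: "(\<Union>j\<in>{j. A i j = 1}. R j) - D i \<in> null_sets M" for i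
    using c[of i] D_meas cU by (auto simp: ae_set_eq_def null_sets_def)
  have bn: "space M - (\<Union>j. R j) \<in> null_sets M"
    using b R_meas by (auto simp: ae_set_eq_def null_sets_def)
  have P1: "R j \<inter> D i \<in> null_sets M" if "A i j = 0" for i j
  proof -
    have "R j \<inter> D i \<subseteq> (D i - (\<Union>j\<in>{j. A i j = 1}. R j)) \<union> (\<Union>k\<in>{k. A i k = 1}. R j \<inter> R k)"
      by auto
    moreover have "(\<Union>k\<in>{k. A i k = 1}. R j \<inter> R k) \<in> null_sets M"
      using that by (intro null_sets_UN') (auto intro!: Rn)
    ultimately show ?thesis using c1[of i] R_meas D_meas
      by (meson null_sets.Un null_sets_subset sets.Int)
  qed
  have P2: "R j - D i \<in> null_sets M" if "A i j = 1" for i j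
    by (rule null_sets_subset[OF c2[of i]]) (use that R_meas D_meas in auto)
  define N1 where "N1 u k = (if A u k = 0 then R k \<inter> D u else {})" for u k
  define N2 where "N2 u k = (if A u k = 1 then R k - D u else {})" for u k
  have N1n: "(\<Union>u. \<Union>k. N1 u k) \<in> null_sets M"
    by (intro null_sets_UN) (auto simp: N1_def P1)
  have N2n: "(\<Union>u. \<Union>k. N2 u k) \<in> null_sets M"
    by (intro null_sets_UN) (auto simp: N2_def P2)
  have BIG: "(space M - (\<Union>j. R j)) \<union> (\<Union>u. \<Union>k. N1 u k) \<union> (\<Union>u. \<Union>k. N2 u k) \<in> null_sets M"
    using bn N1n N2n by auto
  have part2: "ae_set_eq M
              (space M \<inter> (\<Inter>u\<in>U. D u) \<inter> (\<Inter>v\<in>V. space M - D v))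
              (\<Union>j\<in>{j. Aprod A U V j = 1}. R j)" if fin: "finite U" "finite V" for U V
  proof -
    let ?L = "space M \<inter> (\<Inter>u\<in>U. D u) \<inter> (\<Inter>v\<in>V. space M - D v)"
    let ?S = "\<Union>j\<in>{j. Aprod A U V j = 1}. R j"
    have iff: "Aprod A U V j = 1 \<longleftrightarrow> (\<forall>u\<in>U. A u j = 1) \<and> (\<forall>v\<in>V. A v j = 0)" for j
      using Aprod_iff[OF A01 fin] .
    have Lm: "?L \<in> sets M"
    proof (cases "U = {}")
      case True then show ?thesis using D_meas fin by auto
    next
      case False then show ?thesis using D_meas fin by auto
    qed
    have Sm: "?S \<in> sets M" using R_meas by auto
    have s1: "?L - ?S \<subseteq> (space M - (\<Union>j. R j)) \<union> (\<Union>u. \<Union>k. N1 u k) \<union> (\<Union>u. \<Union>k. N2 u k)"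
    proof
      fix x assume x: "x \<in> ?L - ?S"
      show "x \<in> (space M - (\<Union>j. R j)) \<union> (\<Union>u. \<Union>k. N1 u k) \<union> (\<Union>u. \<Union>k. N2 u k)"
      proof (cases "\<exists>k. x \<in> R k")
        case False then show ?thesis using x by auto
      next
        case True
        then obtain k where k: "x \<in> R k" by auto
        with x have "\<not> Aprod A U V k = 1" by auto
        then obtain w where "(w \<in> U \<and> A w k \<noteq> 1) \<or> (w \<in> V \<and> A w k \<noteq> 0)"
          unfolding iff by auto
        then have "(w \<in> U \<and> A w k = 0) \<or> (w \<in> V \<and> A w k = 1)" using A01[of w k] by auto
        moreover have "\<forall>v\<in>V. x \<notin> D v" "\<forall>u\<in>U. x \<in> D u" using x by (auto split: if_splits)
        ultimately show ?thesis using k unfolding N1_def N2_def by auto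
      qed
    qed
    have s2: "?S - ?L \<subseteq> (\<Union>u. \<Union>k. N1 u k) \<union> (\<Union>u. \<Union>k. N2 u k)"
    proof
      fix x assume x: "x \<in> ?S - ?L"
      then obtain j where j: "Aprod A U V j = 1" "x \<in> R j" by auto
      have "x \<in> space M" using j R_meas sets.sets_into_space by blast
      with x j obtain w where "(w \<in> U \<and> x \<notin> D w) \<or> (w \<in> V \<and> x \<in> D w)" by (auto split: if_splits)
      then show "x \<in> (\<Union>u. \<Union>k. N1 u k) \<union> (\<Union>u. \<Union>k. N2 u k)"
        using j iff unfolding N1_def N2_def by fastforce
    qed
    have "?L - ?S \<in> null_sets M"
      by (rule null_sets_subset[OF BIG]) (use Lm Sm s1 in auto)
    moreover have "?S - ?L \<in> null_sets M"
      by (rule null_sets_subset[OF null_sets.Un[OF N1n N2n]]) (use Lm Sm s2 in auto)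
    ultimately show ?thesis unfolding ae_set_eq_def by (blast intro: null_setsD1)
  qed
  show ?thesis
  proof (intro conjI allI impI)
    fix i j show "A i j = 0 \<Longrightarrow> emeasure M (R j \<inter> D i) = 0" using P1 by (blast intro: null_setsD1)
    show "A i j = 1 \<Longrightarrow> emeasure M (R j - D i) = 0" using P2 by (blast intro: null_setsD1)
  next
    fix U V :: "nat set"
    assume "finite U \<and> finite V \<and> finite {j. Aprod A U V j = 1}"
    then show "ae_set_eq M (space M \<inter> (\<Inter>u\<in>U. D u) \<inter> (\<Inter>v\<in>V. space M - D v))
              (\<Union>j\<in>{j. Aprod A U V j = 1}. R j)" using part2 by blast
  qed
qed

end
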